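(* Let $(T(t))_{t\ge0}$ be a bounded $C_0$-semigroup on a Banach space $E$ that is norm continuous at infinity. Then for all $n\in\mathbb{N}$ and $t_1,\dots,t_n\ge0$, $$\ker(T(t_1)-\mathrm{Id})\cdots(T(t_n)-\mathrm{Id})=\ker(T(t_1)-\mathrm{Id})+\cdots+\ker(T(t_n)-\mathrm{Id}).$$
   Context: With $\omega_0=\omega_0(T)=\inf\{\omega\in\mathbb{R}:\exists M,\ \|T(t)\|\le Me^{\omega t}\ \forall t\ge0\}$ the growth bound, the semigroup is norm continuous at infinity if $\lim_{t\to\infty}\limsup_{h\downarrow0}\|e^{-\omega_0t}T(t)(\mathrm{Id}-e^{-\omega_0h}T(h))\|=0$. *)

theory Defs
  imports "HOL-Analysis.Analysis" "HOL-Library.Set_Algebras"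
begin

text \<open>A C0-semigroup on a (real) Banach space, given as a map from the
  time parameter to bounded linear operators (values for t < 0 are irrelevant).\<close>
definition C0_semigroup :: "(real \<Rightarrow> ('a::banach \<Rightarrow>\<^sub>L 'a)) \<Rightarrow> bool" where
  "C0_semigroup T \<longleftrightarrow>
     T 0 = id_blinfun \<and>
     (\<forall>s t. 0 \<le> s \<longrightarrow> 0 \<le> t \<longrightarrow> T (s + t) = T s o\<^sub>L T t) \<and>
     (\<forall>x. continuous_on {0..} (\<lambda>t. blinfun_apply (T t) x))"

definition bounded_semigroup :: "(real \<Rightarrow> ('a::real_normed_vector \<Rightarrow>\<^sub>L 'a)) \<Rightarrow> bool" where
  "bounded_semigroup T \<longleftrightarrow> (\<exists>M. \<forall>t\<ge>0. norm (T t) \<le> M)"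

text \<open>Growth bound, as an extended real (it may be \<open>-\<infinity>\<close>).\<close>
definition growth_bound :: "(real \<Rightarrow> ('a::real_normed_vector \<Rightarrow>\<^sub>L 'a)) \<Rightarrow> ereal" where
  "growth_bound T = Inf {ereal \<omega> | \<omega>. \<exists>M. \<forall>t\<ge>0. norm (T t) \<le> M * exp (\<omega> * t)}"

text \<open>Norm continuity at infinity: the defining formula requires a real growth bound.\<close>
definition norm_continuous_at_infinity :: "(real \<Rightarrow> ('a::real_normed_vector \<Rightarrow>\<^sub>L 'a)) \<Rightarrow> bool" where
  "norm_continuous_at_infinity T \<longleftrightarrow>
     (\<exists>\<omega>0::real. growth_bound T = ereal \<omega>0 \<and>
        ((\<lambda>t. Limsup (at_right 0) (\<lambda>h. ereal (norm
            (exp (- \<omega>0 * t) *\<^sub>R (T t o\<^sub>L (id_blinfun - exp (- \<omega>0 * h) *\<^sub>R T h))))))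
          \<longlongrightarrow> 0) at_top)"

definition ker :: "('a::real_normed_vector \<Rightarrow>\<^sub>L 'b::real_normed_vector) \<Rightarrow> 'a set" where
  "ker A = {x. blinfun_apply A x = 0}"

end

theory Submission
  imports Defs
begin


locale sg =
  fixes T :: "real \<Rightarrow> ('a::banach \<Rightarrow>\<^sub>L 'a)"
  assumes C0: "C0_semigroup T" and bdd: "bounded_semigroup T"
begin

lemma T0: "T 0 = id_blinfun" using C0 unfolding C0_semigroup_def by auto
lemma T0x [simp]: "T 0 x = x" by (simp add: T0)
lemma Tadd: "0 \<le> s \<Longrightarrow> 0 \<le> r \<Longrightarrow> T (s + r) x = T s (T r x)"
  using C0 unfolding C0_semigroup_def by auto
lemma Tcomm: "0 \<le> s \<Longrightarrow> 0 \<le> r \<Longrightarrow> T s (T r x) = T r (T s x)"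
  by (metis Tadd add.commute)
lemma Tcont: "continuous_on {0..} (\<lambda>t. T t x)" using C0 unfolding C0_semigroup_def by auto

definition Mb where "Mb = (SOME M. \<forall>t\<ge>0. norm (T t) \<le> M)"
lemma normT: "0 \<le> t \<Longrightarrow> norm (T t) \<le> Mb"
  using bdd someI_ex[of "\<lambda>M. \<forall>t\<ge>0. norm (T t) \<le> M"] unfolding bounded_semigroup_def Mb_def by blast
lemma Mb_nonneg: "0 \<le> Mb" using normT[of 0] norm_ge_zero[of "T 0"] by linarith
lemma normTx: "0 \<le> t \<Longrightarrow> norm (T t x) \<le> Mb * norm x"
  by (meson Mb_nonneg norm_blinfun mult_right_mono norm_ge_zero normT order_trans)

definition Cp :: "(nat \<Rightarrow> real) \<Rightarrow> nat list \<Rightarrow> 'a \<Rightarrow>\<^sub>L 'a" where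
 "Cp t L = foldr (\<lambda>i A. (T (t i) - id_blinfun) o\<^sub>L A) L id_blinfun"

lemma Cp_Nil [simp]: "Cp t [] x = x" by (simp add: Cp_def)
lemma Cp_Cons: "Cp t (i#L) x = T (t i) (Cp t L x) - Cp t L x"
  by (simp add: Cp_def blinfun.diff_left)

lemma Cp_commT: "\<forall>i\<in>set L. 0 \<le> t i \<Longrightarrow> 0 \<le> s \<Longrightarrow> Cp t L (T s x) = T s (Cp t L x)"
proof (induction L)
  case Nil then show ?case by simp
next
  case (Cons a L)
  then show ?case by (simp add: Cp_Cons blinfun.diff_right Tcomm)
qed

lemma Cp_remove: "i \<in> set L \<Longrightarrow> \<forall>j\<in>set L. 0 \<le> t j \<Longrightarrow>
   Cp t L x = T (t i) (Cp t (remove1 i L) x) - Cp t (remove1 i L) x"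
proof (induction L)
  case Nil then show ?case by simp
next
  case (Cons a L)
  show ?case
  proof (cases "a = i")
    case True then show ?thesis by (simp add: Cp_Cons)
  next
    case False
    then have iL: "i \<in> set L" using Cons by auto
    define w where "w = Cp t (remove1 i L) x"
    have e: "Cp t L x = T (t i) w - w" using Cons iL w_def by auto
    have r: "remove1 i (a # L) = a # remove1 i L" using False by simp
    have ta: "0 \<le> t a" "0 \<le> t i" using Cons.prems by auto
    show ?thesis unfolding r Cp_Cons e w_def[symmetric]
      by (simp add: blinfun.diff_right Tcomm[OF ta] algebra_simps)
  qed
qed

lemma Cp_lin: "Cp t L (a *\<^sub>R x + b *\<^sub>R y) = a *\<^sub>R Cp t L x + b *\<^sub>R Cp t L y"
  by (simp add: blinfun.add_right blinfun.scaleR_right)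

end


lemma cos_add_2pi_int: "cos (x + 2 * pi * of_int n) = cos x"
  by (simp add: cos_add)
lemma sin_add_2pi_int: "sin (x + 2 * pi * of_int n) = sin x"
  by (simp add: sin_add)

lemma per_iter:
  fixes F :: "real \<Rightarrow> 'b"
  assumes per: "\<And>s. 0 \<le> s \<Longrightarrow> F (s + p) = F s" and p: "0 \<le> p" and s: "0 \<le> s"
  shows "F (s + real m * p) = F s"
proof (induction m)
  case 0 then show ?case by simp
next
  case (Suc m)
  have "F (s + real (Suc m) * p) = F ((s + real m * p) + p)" by (simp add: algebra_simps)
  also have "\<dots> = F (s + real m * p)" using per s p by simp
  finally show ?case using Suc by simp
qed

lemma per_shift0:
  fixes F :: "real \<Rightarrow> 'b::banach"
  assumes cont: "continuous_on {0..} F" and per: "\<And>s. 0 \<le> s \<Longrightarrow> F (s + p) = F s"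
    and h: "0 \<le> h" "h \<le> p"
  shows "integral {0..p} (\<lambda>s. F (s + h)) = integral {0..p} F"
proof -
  have ci: "\<And>a b. 0 \<le> a \<Longrightarrow> F integrable_on {a..b}"
    by (rule integrable_continuous_real, rule continuous_on_subset[OF cont]) auto
  have "integral {0..p} (\<lambda>s. F (s + h)) = integral {h..p+h} F"
    using integral_shift_real_ivl[of h h "p+h" F] by (simp only: diff_self add_diff_cancel)
  also have "\<dots> = integral {h..p} F + integral {p..p+h} F"
    using Henstock_Kurzweil_Integration.integral_combine[where f=F and a=h and c=p and b="p+h"] ci[of h "p+h"] h by simp
  also have "integral {p..p+h} F = integral {0..h} (\<lambda>s. F (s + p))"
    using integral_shift_real_ivl[of p p "p+h" F] by (simp only: diff_self add_diff_cancel_left')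
  also have "\<dots> = integral {0..h} F"
    by (rule integral_cong) (use per in auto)
  also have "integral {h..p} F + integral {0..h} F = integral {0..p} F"
    using Henstock_Kurzweil_Integration.integral_combine[where f=F and a=0 and c=h and b=p] ci[of 0 p] h by (simp add: add.commute)
  finally show ?thesis .
qed

lemma per_shift:
  fixes F :: "real \<Rightarrow> 'b::banach"
  assumes cont: "continuous_on {0..} F" and per: "\<And>s. 0 \<le> s \<Longrightarrow> F (s + p) = F s"
    and h: "0 \<le> h" and p: "0 < p"
  shows "integral {0..p} (\<lambda>s. F (s + h)) = integral {0..p} F"
proof -
  define m where "m = nat (floor (h / p))"
  define h0 where "h0 = h - real m * p"
  have fl: "real_of_int (floor (h/p)) \<le> h/p" "h/p < real_of_int (floor (h/p)) + 1" by linarith+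
  have m0: "real m = real_of_int (floor (h/p))" using h p unfolding m_def by simp
  have "real m * p \<le> h" using fl(1) m0 p by (metis pos_le_divide_eq)
  hence h00: "0 \<le> h0" unfolding h0_def by simp
  have "h < (real m + 1) * p" using fl(2) m0 p by (metis pos_divide_less_eq)
  hence h01: "h0 \<le> p" unfolding h0_def by (simp add: algebra_simps)
  have "integral {0..p} (\<lambda>s. F (s + h)) = integral {0..p} (\<lambda>s. F (s + h0))"
  proof (rule integral_cong)
    fix s assume "s \<in> {0..p}"
    hence "0 \<le> s + h0" using h00 by simp
    then have "F ((s + h0) + real m * p) = F (s + h0)"
      by (intro per_iter[where F=F]) (use per p in auto)
    then show "F (s + h) = F (s + h0)" unfolding h0_def by (simp add: algebra_simps)
  qed
  also have "\<dots> = integral {0..p} F" using per_shift0[OF cont per h00 h01] .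
  finally show ?thesis .
qed

locale per = sg + fixes p :: real assumes ppos: "0 < p"
begin

definition Y where "Y = {y. T p y = y}"

lemma Tper: "y \<in> Y \<Longrightarrow> 0 \<le> s \<Longrightarrow> T (s + p) y = T s y"
  using Tadd[of s p y] ppos unfolding Y_def by simp

lemma TY: "y \<in> Y \<Longrightarrow> 0 \<le> s \<Longrightarrow> T s y \<in> Y"
  using Tcomm[of s p y] ppos unfolding Y_def by simp

definition om :: "int \<Rightarrow> real" where "om m = 2 * pi * of_int m / p"

lemma om_per: "om m * (s + p) = om m * s + 2 * pi * of_int m"
  using ppos unfolding om_def by (simp add: field_simps)

definition Ac :: "int \<Rightarrow> 'a \<Rightarrow> 'a" where
  "Ac m x = integral {0..p} (\<lambda>s. cos (om m * s) *\<^sub>R T s x)"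
definition As :: "int \<Rightarrow> 'a \<Rightarrow> 'a" where
  "As m x = integral {0..p} (\<lambda>s. sin (om m * s) *\<^sub>R T s x)"

lemma contT: "continuous_on S f \<Longrightarrow> S \<subseteq> {0..} \<Longrightarrow> continuous_on S (\<lambda>s. f s *\<^sub>R T s x)"
  by (intro continuous_on_scaleR continuous_on_subset[OF Tcont])

lemma intT: "continuous_on {0..p} f \<Longrightarrow> (\<lambda>s. f s *\<^sub>R T s x) integrable_on {0..p}"
  by (rule integrable_continuous_real, rule contT) auto

lemma integral_T_apply:
  assumes "continuous_on {0..p} f"
  shows "blinfun_apply B (integral {0..p} (\<lambda>s. f s *\<^sub>R T s x)) = integral {0..p} (\<lambda>s. f s *\<^sub>R B (T s x))"
proof -
  have "integral {0..p} (blinfun_apply B \<circ> (\<lambda>s. f s *\<^sub>R T s x)) = B (integral {0..p} (\<lambda>s. f s *\<^sub>R T s x))"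
    by (rule integral_linear[OF intT[OF assms]]) (rule blinfun.bounded_linear_right)
  then show ?thesis by (simp add: o_def blinfun.scaleR_right)
qed

lemma rot_gen:
  assumes y: "y \<in> Y" and r: "0 \<le> r"
  shows "T r (Ac m y) = cos (om m * r) *\<^sub>R Ac m y + sin (om m * r) *\<^sub>R As m y"
    and "T r (As m y) = cos (om m * r) *\<^sub>R As m y - sin (om m * r) *\<^sub>R Ac m y"
proof -
  have c1: "continuous_on {0..p} (\<lambda>s. cos (om m * s))" "continuous_on {0..p} (\<lambda>s. sin (om m * s))"
    by (intro continuous_intros)+
  have TT: "T r (T s y) = T (s + r) y" if "s \<in> {0..p}" for s using Tadd[of s r y] Tcomm[of s r y] r that by auto
  define F where "F = (\<lambda>s. cos (om m * (s - r)) *\<^sub>R T s y)"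
  define G where "G = (\<lambda>s. sin (om m * (s - r)) *\<^sub>R T s y)"
  have cF: "continuous_on {0..} F" unfolding F_def by (rule contT) (auto intro!: continuous_intros)
  have cG: "continuous_on {0..} G" unfolding G_def by (rule contT) (auto intro!: continuous_intros)
  have pF: "F (s + p) = F s" if "0 \<le> s" for s
  proof -
    have "om m * (s + p - r) = om m * (s - r) + 2 * pi * of_int m" using om_per[of m "s - r"] by (simp add: algebra_simps)
    then show ?thesis unfolding F_def using Tper[OF y that] cos_add_2pi_int by simp
  qed
  have pG: "G (s + p) = G s" if "0 \<le> s" for s
  proof -
    have "om m * (s + p - r) = om m * (s - r) + 2 * pi * of_int m" using om_per[of m "s - r"] by (simp add: algebra_simps)
    then show ?thesis unfolding G_def using Tper[OF y that] sin_add_2pi_int by simp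
  qed
  have "T r (Ac m y) = integral {0..p} (\<lambda>s. cos (om m * s) *\<^sub>R T (s + r) y)"
    unfolding Ac_def integral_T_apply[OF c1(1)] by (rule integral_cong) (simp add: TT)
  also have "\<dots> = integral {0..p} (\<lambda>s. F (s + r))" unfolding F_def by simp
  also have "\<dots> = integral {0..p} F" by (rule per_shift[OF cF pF r ppos])
  also have "\<dots> = integral {0..p} (\<lambda>s. cos (om m * r) *\<^sub>R (cos (om m * s) *\<^sub>R T s y) + sin (om m * r) *\<^sub>R (sin (om m * s) *\<^sub>R T s y))"
    unfolding F_def by (rule integral_cong) (simp add: right_diff_distrib cos_diff scaleR_add_left algebra_simps)
  also have "\<dots> = cos (om m * r) *\<^sub>R Ac m y + sin (om m * r) *\<^sub>R As m y"
    unfolding Ac_def As_def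
    by (simp only: integral_add[OF integrable_cmul[OF intT[OF c1(1)]] integrable_cmul[OF intT[OF c1(2)]]] integral_cmul)
  finally show "T r (Ac m y) = cos (om m * r) *\<^sub>R Ac m y + sin (om m * r) *\<^sub>R As m y" .
  have "T r (As m y) = integral {0..p} (\<lambda>s. sin (om m * s) *\<^sub>R T (s + r) y)"
    unfolding As_def integral_T_apply[OF c1(2)] by (rule integral_cong) (simp add: TT)
  also have "\<dots> = integral {0..p} (\<lambda>s. G (s + r))" unfolding G_def by simp
  also have "\<dots> = integral {0..p} G" by (rule per_shift[OF cG pG r ppos])
  also have "\<dots> = integral {0..p} (\<lambda>s. cos (om m * r) *\<^sub>R (sin (om m * s) *\<^sub>R T s y) - sin (om m * r) *\<^sub>R (cos (om m * s) *\<^sub>R T s y))"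
    unfolding G_def by (rule integral_cong) (simp add: right_diff_distrib sin_diff scaleR_diff_left algebra_simps)
  also have "\<dots> = cos (om m * r) *\<^sub>R As m y - sin (om m * r) *\<^sub>R Ac m y"
    unfolding Ac_def As_def
    by (simp only: integral_diff[OF integrable_cmul[OF intT[OF c1(2)]] integrable_cmul[OF intT[OF c1(1)]]] integral_cmul)
  finally show "T r (As m y) = cos (om m * r) *\<^sub>R As m y - sin (om m * r) *\<^sub>R Ac m y" .
qed

end


context per begin

lemma om_add: "om (j + k) = om j + om k" unfolding om_def by (simp add: add_divide_distrib distrib_left)
lemma om_diff: "om (j - k) = om j - om k" unfolding om_def by (simp add: diff_divide_distrib right_diff_distrib)
lemma om_p: "om m * p = 2 * pi * of_int m" unfolding om_def using ppos by simp
lemma om_0 [simp]: "om 0 = 0" unfolding om_def by simp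
lemma om_nz: "m \<noteq> 0 \<Longrightarrow> om m \<noteq> 0" unfolding om_def using ppos by simp

lemma int_cos: "((\<lambda>s. cos (om m * s)) has_integral (if m = 0 then p else 0)) {0..p}"
proof (cases "m = 0")
  case True
  then show ?thesis using has_integral_const_real[of "1::real" 0 p] ppos by simp
next
  case False
  let ?f = "\<lambda>s. sin (om m * s) / om m"
  have d: "(?f has_vector_derivative cos (om m * s)) (at s within {0..p})" for s
    unfolding has_real_derivative_iff_has_vector_derivative[symmetric]
    using om_nz[OF False] by (auto intro!: derivative_eq_intros)
  have h: "((\<lambda>s. cos (om m * s)) has_integral (?f p - ?f 0)) {0..p}"
    by (rule fundamental_theorem_of_calculus) (use ppos d in auto)
  have e: "?f p - ?f 0 = 0" using om_p[of m] by simp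
  show ?thesis using h unfolding e using False by simp
qed

lemma int_sin: "((\<lambda>s. sin (om m * s)) has_integral 0) {0..p}"
proof (cases "m = 0")
  case True
  then show ?thesis by simp
next
  case False
  let ?f = "\<lambda>s. - cos (om m * s) / om m"
  have d: "(?f has_vector_derivative sin (om m * s)) (at s within {0..p})" for s
    unfolding has_real_derivative_iff_has_vector_derivative[symmetric]
    using om_nz[OF False] by (auto intro!: derivative_eq_intros)
  have h: "((\<lambda>s. sin (om m * s)) has_integral (?f p - ?f 0)) {0..p}"
    by (rule fundamental_theorem_of_calculus) (use ppos d in auto)
  have e: "?f p - ?f 0 = 0" using om_p[of m] by simp
  show ?thesis using h unfolding e using False by simp
qed

lemma int_cc: "((\<lambda>s. cos (om (int j) * s) * cos (om (int k) * s)) has_integral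
   (if j = k then (if k = 0 then p else p/2) else 0)) {0..p}"
proof -
  have e: "cos (om (int j) * s) * cos (om (int k) * s) = (1/2) * cos (om (int j - int k) * s) + (1/2) * cos (om (int j + int k) * s)" for s
    by (simp add: om_add om_diff cos_diff cos_add algebra_simps)
  have "((\<lambda>s. (1/2) * cos (om (int j - int k) * s) + (1/2) * cos (om (int j + int k) * s)) has_integral
     ((1/2) * (if int j - int k = 0 then p else 0) + (1/2) * (if int j + int k = 0 then p else 0))) {0..p}"
    by (intro has_integral_add has_integral_mult_right int_cos)
  then show ?thesis unfolding e by (cases "j = k"; cases "k = 0"; simp)
qed

lemma int_cs: "((\<lambda>s. cos (om (int j) * s) * sin (om (int k) * s)) has_integral 0) {0..p}"
proof -
  have e: "cos (om (int j) * s) * sin (om (int k) * s) = (1/2) * sin (om (int k + int j) * s) + (1/2) * sin (om (int k - int j) * s)" for s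
    by (simp add: om_add om_diff sin_diff sin_add algebra_simps)
  have "((\<lambda>s. (1/2) * sin (om (int k + int j) * s) + (1/2) * sin (om (int k - int j) * s)) has_integral
     ((1/2) * 0 + (1/2) * 0)) {0..p}"
    by (intro has_integral_add has_integral_mult_right int_sin)
  then show ?thesis unfolding e by simp
qed

lemma int_sc: "((\<lambda>s. sin (om (int j) * s) * cos (om (int k) * s)) has_integral 0) {0..p}"
  using int_cs[of k j] by (simp add: mult.commute)

lemma int_ss: "((\<lambda>s. sin (om (int j) * s) * sin (om (int k) * s)) has_integral
   (if j = k \<and> k \<noteq> 0 then p/2 else 0)) {0..p}"
proof -
  have e: "sin (om (int j) * s) * sin (om (int k) * s) = (1/2) * cos (om (int j - int k) * s) - (1/2) * cos (om (int j + int k) * s)" for s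
    by (simp add: om_add om_diff cos_diff cos_add algebra_simps)
  have "((\<lambda>s. (1/2) * cos (om (int j - int k) * s) - (1/2) * cos (om (int j + int k) * s)) has_integral
     ((1/2) * (if int j - int k = 0 then p else 0) - (1/2) * (if int j + int k = 0 then p else 0))) {0..p}"
    by (intro has_integral_diff has_integral_mult_right int_cos)
  then show ?thesis unfolding e by (cases "j = k"; cases "k = 0"; simp)
qed

definition rotpair :: "real \<Rightarrow> 'a \<Rightarrow> 'a \<Rightarrow> bool" where
  "rotpair w x x' \<longleftrightarrow> (\<forall>r\<ge>0. T r x = cos (w * r) *\<^sub>R x + sin (w * r) *\<^sub>R x' \<and>
       T r x' = cos (w * r) *\<^sub>R x' - sin (w * r) *\<^sub>R x)"

lemma Ac_rot:
  assumes "rotpair (om (int k)) x x'"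
  shows "Ac (int j) x = (if j = k then (if k = 0 then p else p/2) else 0) *\<^sub>R x"
proof -
  let ?c = "\<lambda>s. cos (om (int j) * s)"
  have "((\<lambda>s. cos (om (int j) * s) *\<^sub>R T s x) has_integral
      ((if j = k then (if k = 0 then p else p/2) else 0) *\<^sub>R x + 0 *\<^sub>R x')) {0..p}"
  proof -
    have "((\<lambda>s. (cos (om (int j) * s) * cos (om (int k) * s)) *\<^sub>R x + (cos (om (int j) * s) * sin (om (int k) * s)) *\<^sub>R x') has_integral
      ((if j = k then (if k = 0 then p else p/2) else 0) *\<^sub>R x + 0 *\<^sub>R x')) {0..p}"
      by (intro has_integral_add has_integral_scaleR_left int_cc int_cs)
    then show ?thesis
    proof (rule has_integral_eq[rotated])
      fix s :: real assume "s \<in> {0..p}"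
      then have "T s x = cos (om (int k) * s) *\<^sub>R x + sin (om (int k) * s) *\<^sub>R x'"
        using assms unfolding rotpair_def by auto
      then show "(?c s * cos (om (int k) * s)) *\<^sub>R x + (?c s * sin (om (int k) * s)) *\<^sub>R x' = ?c s *\<^sub>R T s x"
        by (simp add: scaleR_add_right)
    qed
  qed
  then show ?thesis unfolding Ac_def by (simp add: integral_unique)
qed

lemma As_rot:
  assumes "rotpair (om (int k)) x x'"
  shows "As (int j) x = (if j = k \<and> k \<noteq> 0 then p/2 else 0) *\<^sub>R x'"
proof -
  let ?c = "\<lambda>s. sin (om (int j) * s)"
  have "((\<lambda>s. sin (om (int j) * s) *\<^sub>R T s x) has_integral
      (0 *\<^sub>R x + (if j = k \<and> k \<noteq> 0 then p/2 else 0) *\<^sub>R x')) {0..p}"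
  proof -
    have "((\<lambda>s. (sin (om (int j) * s) * cos (om (int k) * s)) *\<^sub>R x + (sin (om (int j) * s) * sin (om (int k) * s)) *\<^sub>R x') has_integral
      (0 *\<^sub>R x + (if j = k \<and> k \<noteq> 0 then p/2 else 0) *\<^sub>R x')) {0..p}"
      by (intro has_integral_add has_integral_scaleR_left int_ss int_sc)
    then show ?thesis
    proof (rule has_integral_eq[rotated])
      fix s :: real assume "s \<in> {0..p}"
      then have "T s x = cos (om (int k) * s) *\<^sub>R x + sin (om (int k) * s) *\<^sub>R x'"
        using assms unfolding rotpair_def by auto
      then show "(?c s * cos (om (int k) * s)) *\<^sub>R x + (?c s * sin (om (int k) * s)) *\<^sub>R x' = ?c s *\<^sub>R T s x"
        by (simp add: scaleR_add_right)
    qed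
  qed
  then show ?thesis unfolding As_def by (simp add: integral_unique)
qed

end


lemma trig_c: "(1 + cos (b::real)) / 2 * cos a = (1/2) * cos a + (1/4) * cos (a + b) + (1/4) * cos (a - b)"
  by (simp add: cos_add cos_diff algebra_simps)
lemma trig_s: "(1 + cos (b::real)) / 2 * sin a = (1/2) * sin a + (1/4) * sin (a + b) + (1/4) * sin (a - b)"
  by (simp add: sin_add sin_diff algebra_simps)

context per begin

definition cc :: "real \<Rightarrow> real" where "cc s = (1 + cos (om 1 * s)) / 2"

lemma cc_cont [continuous_intros]: "continuous_on S cc"
  unfolding cc_def by (intro continuous_intros) auto

lemma Ac_neg: "Ac (- m) x = Ac m x"
  unfolding Ac_def om_def by simp
lemma As_neg: "As (- m) x = - As m x"
  unfolding As_def om_def by (simp flip: integral_neg)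

lemma kernel_vanish:
  assumes r: "\<forall>m. Ac m r = 0 \<and> As m r = 0"
  shows "integral {0..p} (\<lambda>s. (cc s ^ N * cos (om j * s)) *\<^sub>R T s r) = 0 \<and>
         integral {0..p} (\<lambda>s. (cc s ^ N * sin (om j * s)) *\<^sub>R T s r) = 0"
proof (induction N arbitrary: j)
  case 0 then show ?case using r by (simp add: Ac_def As_def)
next
  case (Suc N)
  define F where "F = (\<lambda>j s. (cc s ^ N * cos (om j * s)) *\<^sub>R T s r)"
  define G where "G = (\<lambda>j s. (cc s ^ N * sin (om j * s)) *\<^sub>R T s r)"
  have iF: "F j integrable_on {0..p}" for j unfolding F_def by (intro intT continuous_intros)
  have iG: "G j integrable_on {0..p}" for j unfolding G_def by (intro intT continuous_intros)
  have oms: "om (j + 1) * s = om j * s + om 1 * s" "om (j - 1) * s = om j * s - om 1 * s" for s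
    by (simp_all add: om_add om_diff algebra_simps)
  have eF: "(\<lambda>s. (cc s ^ Suc N * cos (om j * s)) *\<^sub>R T s r) =
      (\<lambda>s. ((1/2) *\<^sub>R F j s + (1/4) *\<^sub>R F (j+1) s) + (1/4) *\<^sub>R F (j-1) s)"
  proof
    fix s
    have "cc s ^ Suc N * cos (om j * s) = cc s ^ N * ((1/2) * cos (om j * s) + (1/4) * cos (om (j+1) * s) + (1/4) * cos (om (j-1) * s))"
      unfolding oms using trig_c[of "om 1 * s" "om j * s"] by (simp add: cc_def)
    also have "\<dots> = (1/2) * (cc s ^ N * cos (om j * s)) + (1/4) * (cc s ^ N * cos (om (j+1) * s)) + (1/4) * (cc s ^ N * cos (om (j-1) * s))"
      by (simp add: distrib_left)
    finally have e: "cc s ^ Suc N * cos (om j * s) = (1/2) * (cc s ^ N * cos (om j * s)) + (1/4) * (cc s ^ N * cos (om (j+1) * s)) + (1/4) * (cc s ^ N * cos (om (j-1) * s))" .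
    show "(cc s ^ Suc N * cos (om j * s)) *\<^sub>R T s r = ((1/2) *\<^sub>R F j s + (1/4) *\<^sub>R F (j+1) s) + (1/4) *\<^sub>R F (j-1) s"
      unfolding F_def e by (simp only: scaleR_add_left scaleR_scaleR)
  qed
  have eG: "(\<lambda>s. (cc s ^ Suc N * sin (om j * s)) *\<^sub>R T s r) =
      (\<lambda>s. ((1/2) *\<^sub>R G j s + (1/4) *\<^sub>R G (j+1) s) + (1/4) *\<^sub>R G (j-1) s)"
  proof
    fix s
    have "cc s ^ Suc N * sin (om j * s) = cc s ^ N * ((1/2) * sin (om j * s) + (1/4) * sin (om (j+1) * s) + (1/4) * sin (om (j-1) * s))"
      unfolding oms using trig_s[of "om 1 * s" "om j * s"] by (simp add: cc_def)
    also have "\<dots> = (1/2) * (cc s ^ N * sin (om j * s)) + (1/4) * (cc s ^ N * sin (om (j+1) * s)) + (1/4) * (cc s ^ N * sin (om (j-1) * s))"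
      by (simp add: distrib_left)
    finally have e: "cc s ^ Suc N * sin (om j * s) = (1/2) * (cc s ^ N * sin (om j * s)) + (1/4) * (cc s ^ N * sin (om (j+1) * s)) + (1/4) * (cc s ^ N * sin (om (j-1) * s))" .
    show "(cc s ^ Suc N * sin (om j * s)) *\<^sub>R T s r = ((1/2) *\<^sub>R G j s + (1/4) *\<^sub>R G (j+1) s) + (1/4) *\<^sub>R G (j-1) s"
      unfolding G_def e by (simp only: scaleR_add_left scaleR_scaleR)
  qed
  have IF: "integral {0..p} (F i) = 0" for i using Suc.IH[of i] unfolding F_def by simp
  have IG: "integral {0..p} (G i) = 0" for i using Suc.IH[of i] unfolding G_def by simp
  show ?case unfolding eF eG
    by (simp add: integral_add iF iG integrable_add integrable_cmul IF IG)
qed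

lemma coeffs_zero:
  assumes rY: "r \<in> Y" and rk: "\<forall>k::nat. Ac (int k) r = 0 \<and> As (int k) r = 0"
  shows "r = 0"
proof -
  have rall: "\<forall>m. Ac m r = 0 \<and> As m r = 0"
  proof
    fix m :: int
    show "Ac m r = 0 \<and> As m r = 0"
    proof (cases "0 \<le> m")
      case True then show ?thesis using rk[rule_format, of "nat m"] by simp
    next
      case False
      then obtain k where k: "m = - int k" by (metis int_nat_eq minus_minus neg_0_le_iff_le not_le order_less_imp_le)
      then show ?thesis using rk[rule_format, of k] by (simp add: Ac_neg As_neg)
    qed
  qed
  have K: "integral {0..p} (\<lambda>s. cc s ^ N *\<^sub>R T s r) = 0" for N
    using kernel_vanish[OF rall, of N 0] by simp
  define g where "g s = norm (r - T s r)" for s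
  have gc: "continuous_on {0..p} g" unfolding g_def
    by (intro continuous_intros continuous_on_subset[OF Tcont]) auto
  have g0: "g 0 = 0" unfolding g_def by simp
  have gp: "g p = 0" using rY unfolding g_def Y_def by simp
  define G where "G = (1 + Mb) * norm r"
  have G0: "0 \<le> G" unfolding G_def using Mb_nonneg by simp
  have pG1: "0 < p * G + 1" using ppos G0 by (smt (verit) mult_nonneg_nonneg)
  have gG: "g s \<le> G" if "0 \<le> s" for s
  proof -
    have "g s \<le> norm r + norm (T s r)" unfolding g_def by (rule norm_triangle_ineq4)
    also have "\<dots> \<le> norm r + Mb * norm r" using normTx[OF that] by simp
    finally show ?thesis unfolding G_def by (simp add: algebra_simps)
  qed
  have g_nn: "0 \<le> g s" for s unfolding g_def by simp
  have cc01: "0 \<le> cc s" "cc s \<le> 1" for s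
    unfolding cc_def using cos_ge_minus_one[of "om 1 * s"] cos_le_one[of "om 1 * s"]
    by (simp_all del: cos_ge_minus_one cos_le_one)
  have om1: "om 1 * s = 2 * pi * s / p" for s unfolding om_def by simp
  have main: "norm r \<le> 2 * e" if e: "e > 0" for e
  proof -
    obtain d1 where d1: "d1 > 0" "\<forall>s\<in>{0..p}. dist s 0 < d1 \<longrightarrow> dist (g s) (g 0) < e"
      using gc[unfolded continuous_on_iff] e ppos by (meson atLeastAtMost_iff order_refl less_imp_le)
    obtain d2 where d2: "d2 > 0" "\<forall>s\<in>{0..p}. dist s p < d2 \<longrightarrow> dist (g s) (g p) < e"
      using gc[unfolded continuous_on_iff] e ppos by (meson atLeastAtMost_iff order_refl less_imp_le)
    define \<delta> where "\<delta> = min (min d1 d2) p / 4"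
    have \<delta>: "0 < \<delta>" "\<delta> < d1" "\<delta> < d2" "\<delta> \<le> p / 4" using d1 d2 ppos unfolding \<delta>_def by auto
    have gsmall: "g s \<le> e" if "s \<in> {0..p}" "s \<le> \<delta> \<or> p - \<delta> \<le> s" for s
    proof (cases "s \<le> \<delta>")
      case True
      then have "dist s 0 < d1" using that \<delta> by (simp add: dist_real_def)
      then show ?thesis using d1 that g0 g_nn by (auto simp: dist_real_def)
    next
      case False
      then have "dist s p < d2" using that \<delta> by (auto simp: dist_real_def)
      then show ?thesis using d2 that gp g_nn by (auto simp: dist_real_def)
    qed
    define q where "q = cc \<delta>"
    define q' where "q' = cc (\<delta> / 2)"
    have ang: "0 \<le> 2 * pi * (\<delta>/2) / p" "2 * pi * (\<delta>/2) / p < 2 * pi * \<delta> / p" "2 * pi * \<delta> / p \<le> pi / 2"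
      using \<delta> ppos pi_gt_zero by (auto simp: field_simps)
    have qq: "q < q'" unfolding q_def q'_def cc_def om1
      using cos_monotone_0_pi[OF ang(1) ang(2)] ang(3) pi_gt_zero by simp
    have q0: "0 \<le> q" unfolding q_def using cc01 by simp
    have cmid: "cc s \<le> q" if "\<delta> \<le> s" "s \<le> p - \<delta>" for s
    proof (cases "s \<le> p / 2")
      case True
      have "cos (2 * pi * s / p) \<le> cos (2 * pi * \<delta> / p)"
        by (rule cos_monotone_0_pi_le) (use that True ppos \<delta> pi_gt_zero in \<open>auto simp: field_simps\<close>)
      then show ?thesis unfolding q_def cc_def om1 by simp
    next
      case False
      have s1: "(\<delta> + s) / p \<le> 1" "1/2 \<le> s / p" using that False ppos by (auto simp: field_simps)
      have e1: "2 * pi * \<delta> / p = 2 * pi * ((\<delta> + s) / p) - 2 * pi * s / p" by (simp add: add_divide_distrib algebra_simps)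
      have e2: "2 * pi * s / p = 2 * pi * (s / p)" by simp
      have "2 * pi * ((\<delta> + s) / p) \<le> 2 * pi * 1" using s1(1) pi_gt_zero by (intro mult_left_mono) auto
      hence c1: "2 * pi * \<delta> / p \<le> 2 * pi - 2 * pi * s / p" unfolding e1 by simp
      have "2 * pi * (1/2) \<le> 2 * pi * (s / p)" using s1(2) pi_gt_zero by (intro mult_left_mono) auto
      hence c2: "2 * pi - 2 * pi * s / p \<le> pi" unfolding e2 by simp
      have c0: "0 \<le> 2 * pi * \<delta> / p" using \<delta> ppos by simp
      have "cos (2 * pi - 2 * pi * s / p) \<le> cos (2 * pi * \<delta> / p)"
        by (rule cos_monotone_0_pi_le[OF c0 c1 c2])
      moreover have "cos (2 * pi - 2 * pi * s / p) = cos (2 * pi * s / p)"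
        by (simp add: cos_diff)
      ultimately show ?thesis unfolding q_def cc_def om1 by simp
    qed
    have clow: "q' \<le> cc s" if "0 \<le> s" "s \<le> \<delta> / 2" for s
    proof -
      have "cos (2 * pi * (\<delta>/2) / p) \<le> cos (2 * pi * s / p)"
        by (rule cos_monotone_0_pi_le) (use that ppos \<delta> pi_gt_zero ang in \<open>auto simp: field_simps\<close>)
      then show ?thesis unfolding q'_def cc_def om1 by simp
    qed
    have q'pos: "0 < q'" using qq q0 by simp
    obtain N where N: "(q / q') ^ N < e * (\<delta> / 2) / (p * G + 1)"
    proof -
      have pG: "0 < p * G + 1" using ppos G0 by (smt (verit) mult_nonneg_nonneg)
      have pos: "0 < e * (\<delta> / 2) / (p * G + 1)" using e \<delta> pG by (intro divide_pos_pos mult_pos_pos) auto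
      have lt: "q / q' < 1" using qq q'pos by simp
      show ?thesis using real_arch_pow_inv[OF pos lt] that by blast
    qed
    define I where "I = integral {0..p} (\<lambda>s. cc s ^ N)"
    have icN: "(\<lambda>s. cc s ^ N) integrable_on {a..b}" for a b
      by (intro integrable_continuous_real continuous_intros)
    have Ilow: "(\<delta> / 2) * q' ^ N \<le> I"
    proof -
      have "(\<delta> / 2) * q' ^ N = integral {0..\<delta>/2} (\<lambda>s. q' ^ N)" using \<delta> by simp
      also have "\<dots> \<le> integral {0..\<delta>/2} (\<lambda>s. cc s ^ N)"
        by (rule integral_le) (auto intro!: power_mono clow q'pos[THEN less_imp_le] icN)
      also have "\<dots> \<le> I" unfolding I_def
        by (rule integral_subset_le) (use \<delta> cc01 in \<open>auto intro!: icN\<close>)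
      finally show ?thesis .
    qed
    have "0 < (\<delta> / 2) * q' ^ N" using \<delta> q'pos by simp
    then have Ipos: "0 < I" using Ilow by linarith
    have iTr: "(\<lambda>s. cc s ^ N *\<^sub>R T s r) integrable_on {0..p}" by (intro intT continuous_intros)
    have hI: "((\<lambda>s. cc s ^ N *\<^sub>R r) has_integral I *\<^sub>R r) {0..p}"
      unfolding I_def by (rule has_integral_scaleR_left) (rule integrable_integral[OF icN])
    have "norm r * I = norm (integral {0..p} (\<lambda>s. cc s ^ N *\<^sub>R r) - integral {0..p} (\<lambda>s. cc s ^ N *\<^sub>R T s r))"
      using K[of N] integral_unique[OF hI] Ipos by simp
    also have "\<dots> = norm (integral {0..p} (\<lambda>s. cc s ^ N *\<^sub>R (r - T s r)))"
      using integral_diff[OF has_integral_integrable[OF hI] iTr] by (simp add: scaleR_diff_right)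
    also have "\<dots> \<le> integral {0..p} (\<lambda>s. cc s ^ N * g s)"
    proof (rule Henstock_Kurzweil_Integration.integral_norm_bound_integral)
      show "(\<lambda>s. cc s ^ N *\<^sub>R (r - T s r)) integrable_on {0..p}"
        using integrable_diff[OF has_integral_integrable[OF hI] iTr] by (simp add: scaleR_diff_right)
      show "(\<lambda>s. cc s ^ N * g s) integrable_on {0..p}"
        by (intro integrable_continuous_real continuous_intros gc)
      show "norm (cc s ^ N *\<^sub>R (r - T s r)) \<le> cc s ^ N * g s" if "s \<in> {0..p}" for s
        using cc01[of s] unfolding g_def by simp
    qed
    also have "\<dots> \<le> integral {0..p} (\<lambda>s. e * cc s ^ N + q ^ N * G)"
    proof (rule integral_le)
      show "(\<lambda>s. cc s ^ N * g s) integrable_on {0..p}"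
        by (intro integrable_continuous_real continuous_intros gc)
      show "(\<lambda>s. e * cc s ^ N + q ^ N * G) integrable_on {0..p}"
        by (intro integrable_continuous_real continuous_intros)
      show "cc s ^ N * g s \<le> e * cc s ^ N + q ^ N * G" if s: "s \<in> {0..p}" for s
      proof (cases "s \<le> \<delta> \<or> p - \<delta> \<le> s")
        case True
        then have "cc s ^ N * g s \<le> cc s ^ N * e"
          using gsmall[OF s] cc01[of s] by (simp add: mult_left_mono)
        moreover have "0 \<le> q ^ N * G" using q0 G0 by simp
        ultimately show ?thesis by (simp add: mult.commute)
      next
        case False
        then have "cc s ^ N \<le> q ^ N" using cmid[of s] cc01[of s] by (simp add: power_mono)
        moreover have "g s \<le> G" using gG s by simp
        ultimately have "cc s ^ N * g s \<le> q ^ N * G"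
          using cc01[of s] g_nn[of s] q0 by (simp add: mult_mono)
        moreover have "0 \<le> e * cc s ^ N" using e cc01[of s] by simp
        ultimately show ?thesis by simp
      qed
    qed
    also have "\<dots> = e * I + p * (q ^ N * G)"
      unfolding I_def using ppos
      by (subst integral_add) (auto intro!: integrable_continuous_real continuous_intros)
    finally have ineq: "norm r * I \<le> e * I + p * (q ^ N * G)" .
    define X where "X = p * (q ^ N * G)"
    have X0: "0 \<le> X" unfolding X_def using ppos q0 G0 by simp
    have "norm r \<le> (e * I + X) / I" using ineq Ipos unfolding X_def[symmetric] by (simp add: pos_le_divide_eq)
    also have "(e * I + X) / I = e + X / I" using Ipos by (simp add: add_divide_distrib)
    also have "X / I \<le> X / ((\<delta> / 2) * q' ^ N)"
      by (rule divide_left_mono[OF Ilow X0]) (use \<delta> q'pos Ipos in simp)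
    also have "\<dots> = p * G * (q / q') ^ N / (\<delta> / 2)"
      unfolding X_def power_divide by (simp add: ac_simps)
    also have "\<dots> \<le> p * G * (e * (\<delta> / 2) / (p * G + 1)) / (\<delta> / 2)"
      using N ppos G0 \<delta> by (intro divide_right_mono mult_left_mono) auto
    also have "\<dots> = e * (p * G / (p * G + 1))"
    proof -
      have aux: "\<And>a b d e::real. d \<noteq> 0 \<Longrightarrow> b \<noteq> 0 \<Longrightarrow> a * (e * d / b) / d = e * (a / b)"
        by (simp add: field_simps)
      show ?thesis by (rule aux) (use \<delta> pG1 in auto)
    qed
    also have "\<dots> \<le> e * 1"
      using e pG1 by (intro mult_left_mono) (auto simp: divide_le_eq_1)
    finally show ?thesis by simp
  qed
  have "norm r \<le> 0"
  proof (rule field_le_epsilon)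
    fix e :: real assume "0 < e"
    then show "norm r \<le> 0 + e" using main[of "e/2"] by simp
  qed
  then show ?thesis by simp
qed

end


context per begin

lemma ccos [continuous_intros]: "continuous_on S (\<lambda>s. cos (om m * s))" by (intro continuous_intros)
lemma csin [continuous_intros]: "continuous_on S (\<lambda>s. sin (om m * s))" by (intro continuous_intros)

lemma Ac_add: "Ac m (x + y) = Ac m x + Ac m y"
proof -
  have "Ac m (x + y) = integral {0..p} (\<lambda>s. cos (om m * s) *\<^sub>R T s x + cos (om m * s) *\<^sub>R T s y)"
    unfolding Ac_def by (simp add: blinfun.add_right scaleR_add_right)
  also have "\<dots> = Ac m x + Ac m y" unfolding Ac_def
    by (rule integral_add) (intro intT continuous_intros)+
  finally show ?thesis .
qed
lemma As_add: "As m (x + y) = As m x + As m y"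
proof -
  have "As m (x + y) = integral {0..p} (\<lambda>s. sin (om m * s) *\<^sub>R T s x + sin (om m * s) *\<^sub>R T s y)"
    unfolding As_def by (simp add: blinfun.add_right scaleR_add_right)
  also have "\<dots> = As m x + As m y" unfolding As_def
    by (rule integral_add) (intro intT continuous_intros)+
  finally show ?thesis .
qed
lemma Ac_scale: "Ac m (c *\<^sub>R x) = c *\<^sub>R Ac m x"
proof -
  have "(\<lambda>s. cos (om m * s) *\<^sub>R T s (c *\<^sub>R x)) = (\<lambda>s. c *\<^sub>R (cos (om m * s) *\<^sub>R T s x))"
    by (simp add: blinfun.scaleR_right ac_simps)
  then show ?thesis unfolding Ac_def by (simp only: integral_cmul)
qed
lemma As_scale: "As m (c *\<^sub>R x) = c *\<^sub>R As m x"
proof -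
  have "(\<lambda>s. sin (om m * s) *\<^sub>R T s (c *\<^sub>R x)) = (\<lambda>s. c *\<^sub>R (sin (om m * s) *\<^sub>R T s x))"
    by (simp add: blinfun.scaleR_right ac_simps)
  then show ?thesis unfolding As_def by (simp only: integral_cmul)
qed

definition wt :: "nat \<Rightarrow> real" where "wt k = (if k = 0 then 1/p else 2/p)"
definition ak where "ak k y = wt k *\<^sub>R Ac (int k) y"
definition bk where "bk k y = wt k *\<^sub>R As (int k) y"

lemma wt_nz: "wt k \<noteq> 0" unfolding wt_def using ppos by auto

lemma lin_ak: "linear (ak k)"
  by (rule linearI) (simp_all add: ak_def Ac_add Ac_scale scaleR_add_right)
lemma lin_bk: "linear (bk k)"
  by (rule linearI) (simp_all add: bk_def As_add As_scale scaleR_add_right)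

lemma bk0: "bk 0 y = 0" unfolding bk_def As_def by simp

lemma Y0: "0 \<in> Y" unfolding Y_def by simp
lemma Y_add: "x \<in> Y \<Longrightarrow> y \<in> Y \<Longrightarrow> x + y \<in> Y" unfolding Y_def by (simp add: blinfun.add_right)
lemma Y_diff: "x \<in> Y \<Longrightarrow> y \<in> Y \<Longrightarrow> x - y \<in> Y" unfolding Y_def by (simp add: blinfun.diff_right)
lemma Y_scale: "x \<in> Y \<Longrightarrow> c *\<^sub>R x \<in> Y" unfolding Y_def by (simp add: blinfun.scaleR_right)
lemma Y_sum: "(\<And>i. i \<in> F \<Longrightarrow> f i \<in> Y) \<Longrightarrow> sum f F \<in> Y"
  unfolding Y_def by (simp add: blinfun.sum_right)

lemma cos_omp: "cos (om m * p) = 1" and sin_omp: "sin (om m * p) = 0"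
  by (simp_all only: om_p cos_int_2pin sin_int_2pin)

definition Rv :: "'a \<Rightarrow> 'a \<Rightarrow> complex \<Rightarrow> 'a" where
  "Rv w w' z = Re z *\<^sub>R w + Im z *\<^sub>R w'"

lemma Rv_diff: "Rv w w' a - Rv w w' b = Rv w w' (a - b)"
  unfolding Rv_def by (simp add: algebra_simps)
lemma Rv_add: "Rv w w' a + Rv w w' b = Rv w w' (a + b)"
  unfolding Rv_def by (simp add: algebra_simps)
lemma Rv_1: "Rv w w' 1 = w" unfolding Rv_def by simp
lemma Rv_i: "Rv w w' \<i> = w'" unfolding Rv_def by simp

lemma rot_Rv:
  assumes "rotpair om' w w'" "0 \<le> r"
  shows "T r (Rv w w' z) = Rv w w' (cis (om' * r) * z)"
proof -
  have "T r (Rv w w' z) = Re z *\<^sub>R (cos (om' * r) *\<^sub>R w + sin (om' * r) *\<^sub>R w') + Im z *\<^sub>R (cos (om' * r) *\<^sub>R w' - sin (om' * r) *\<^sub>R w)"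
    using assms unfolding rotpair_def Rv_def by (simp add: blinfun.add_right blinfun.scaleR_right)
  also have "\<dots> = Rv w w' (cis (om' * r) * z)"
    unfolding Rv_def by (simp add: algebra_simps)
  finally show ?thesis .
qed

lemma rotpair_Rv:
  assumes "rotpair om' w w'"
  shows "rotpair om' (Rv w w' z) (Rv w w' (\<i> * z))"
  unfolding rotpair_def
proof (intro allI impI conjI)
  fix r :: real assume r: "0 \<le> r"
  show "T r (Rv w w' z) = cos (om' * r) *\<^sub>R Rv w w' z + sin (om' * r) *\<^sub>R Rv w w' (\<i> * z)"
    unfolding rot_Rv[OF assms r] unfolding Rv_def by (simp add: algebra_simps)
  show "T r (Rv w w' (\<i> * z)) = cos (om' * r) *\<^sub>R Rv w w' (\<i> * z) - sin (om' * r) *\<^sub>R Rv w w' z"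
    unfolding rot_Rv[OF assms r] unfolding Rv_def by (simp add: algebra_simps)
qed

lemma rot_Y:
  assumes "rotpair (om m) w w'"
  shows "w \<in> Y"
  using assms ppos unfolding rotpair_def Y_def by (auto simp: cos_omp sin_omp)

lemma rot_scale:
  assumes "rotpair om' w w'" shows "rotpair om' (c *\<^sub>R w) (c *\<^sub>R w')"
  unfolding rotpair_def
proof (intro allI impI conjI)
  fix r :: real assume r: "0 \<le> r"
  have e: "T r w = cos (om' * r) *\<^sub>R w + sin (om' * r) *\<^sub>R w'" "T r w' = cos (om' * r) *\<^sub>R w' - sin (om' * r) *\<^sub>R w"
    using assms r unfolding rotpair_def by auto
  show "T r (c *\<^sub>R w) = cos (om' * r) *\<^sub>R (c *\<^sub>R w) + sin (om' * r) *\<^sub>R (c *\<^sub>R w')"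
    by (simp only: blinfun.scaleR_right e scaleR_add_right scaleR_scaleR mult.commute)
  show "T r (c *\<^sub>R w') = cos (om' * r) *\<^sub>R (c *\<^sub>R w') - sin (om' * r) *\<^sub>R (c *\<^sub>R w)"
    by (simp only: blinfun.scaleR_right e scaleR_diff_right scaleR_scaleR mult.commute)
qed

lemma rot_swap:
  assumes "rotpair om' w w'" shows "rotpair om' w' (- w)"
  unfolding rotpair_def
proof (intro allI impI conjI)
  fix r :: real assume r: "0 \<le> r"
  have e: "T r w = cos (om' * r) *\<^sub>R w + sin (om' * r) *\<^sub>R w'" "T r w' = cos (om' * r) *\<^sub>R w' - sin (om' * r) *\<^sub>R w"
    using assms r unfolding rotpair_def by auto
  show "T r w' = cos (om' * r) *\<^sub>R w' + sin (om' * r) *\<^sub>R (- w)"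
    by (simp add: e)
  show "T r (- w) = cos (om' * r) *\<^sub>R (- w) - sin (om' * r) *\<^sub>R w'"
    by (simp add: e blinfun.minus_right)
qed

lemma rot_ab: "y \<in> Y \<Longrightarrow> rotpair (om (int k)) (ak k y) (bk k y)"
  unfolding ak_def bk_def
  by (rule rot_scale) (auto simp: rotpair_def rot_gen)

lemma ak_rot:
  assumes "rotpair (om (int k)) w w'"
  shows "ak j w = (if j = k then w else 0)"
  unfolding ak_def Ac_rot[OF assms] wt_def using ppos by auto

lemma bk_rot:
  assumes "rotpair (om (int k)) w w'"
  shows "bk j w = (if j = k \<and> k \<noteq> 0 then w' else 0)"
  unfolding bk_def As_rot[OF assms] wt_def using ppos by auto

lemma Ac_norm: "norm (Ac m w) \<le> p * (Mb * norm w)"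
proof -
  have "norm (Ac m w) \<le> integral {0..p} (\<lambda>s. Mb * norm w)"
    unfolding Ac_def
  proof (rule Henstock_Kurzweil_Integration.integral_norm_bound_integral)
    show "(\<lambda>s. cos (om m * s) *\<^sub>R T s w) integrable_on {0..p}" by (intro intT continuous_intros)
    show "(\<lambda>s. Mb * norm w) integrable_on {0..p}" by (intro integrable_continuous_real continuous_intros)
    show "norm (cos (om m * s) *\<^sub>R T s w) \<le> Mb * norm w" if "s \<in> {0..p}" for s
    proof -
      have "norm (cos (om m * s) *\<^sub>R T s w) = \<bar>cos (om m * s)\<bar> * norm (T s w)" by simp
      also have "\<dots> \<le> 1 * (Mb * norm w)"
        using that by (intro mult_mono normTx abs_cos_le_one) auto
      finally show ?thesis by simp
    qed
  qed
  then have "norm (Ac m w) \<le> Mb * (p * norm w)" using ppos by simp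
  then show ?thesis by (metis mult.left_commute)
qed

lemma Ac_T: "0 \<le> h \<Longrightarrow> T h (Ac m w) = Ac m (T h w)"
  unfolding Ac_def
  by (subst integral_T_apply) (auto intro!: continuous_intros integral_cong simp: Tcomm)

lemma RL:
  assumes d: "0 < \<delta>" and uc: "\<forall>h. 0 < h \<longrightarrow> h < \<delta> \<longrightarrow> (\<forall>y\<in>Y. norm (T h y - y) \<le> norm y / (2 * Mb + 2))"
    and k: "p / (2 * \<delta>) < real k" and y: "y \<in> Y"
  shows "ak k y = 0 \<and> bk k y = 0"
proof -
  have k0: "0 < real k" using k ppos d by (smt (verit) divide_pos_pos)
  define h where "h = p / (2 * real k)"
  have h0: "0 < h" unfolding h_def using ppos k0 by simp
  have hd: "h < \<delta>" unfolding h_def using k d ppos k0 by (simp add: field_simps)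
  have omh: "om (int k) * h = pi" unfolding h_def om_def using ppos k0 by (simp add: field_simps)
  have bnd: "norm (ak k w) \<le> norm w / 2" if w: "w \<in> Y" for w
  proof -
    have "T h (Ac (int k) w) = - Ac (int k) w"
      using rot_gen(1)[OF w, of h "int k"] h0 omh by simp
    hence "Ac (int k) (T h w) = - Ac (int k) w" using Ac_T h0 by simp
    hence "2 *\<^sub>R Ac (int k) w = Ac (int k) (w - T h w)"
      using Ac_add[of "int k" w "- T h w"] Ac_scale[of "int k" "-1" "T h w"] by (simp add: scaleR_2)
    hence "norm (2 *\<^sub>R Ac (int k) w) = norm (Ac (int k) (w - T h w))" by simp
    hence "2 * norm (Ac (int k) w) = norm (Ac (int k) (w - T h w))" by simp
    hence "2 * norm (Ac (int k) w) \<le> p * (Mb * norm (w - T h w))"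
      using Ac_norm[of "int k" "w - T h w"] by linarith
    also have "norm (w - T h w) \<le> norm w / (2 * Mb + 2)"
      using uc h0 hd w by (simp add: norm_minus_commute)
    finally have "2 * norm (Ac (int k) w) \<le> p * (Mb * (norm w / (2 * Mb + 2)))"
      using ppos Mb_nonneg by (smt (verit) mult_left_mono)
    hence "norm (ak k w) \<le> Mb * (norm w / (2 * Mb + 2))"
      unfolding ak_def wt_def using ppos k0 by (simp add: field_simps)
    also have "\<dots> \<le> norm w / 2"
      using Mb_nonneg by (simp add: field_simps)
    finally show ?thesis .
  qed
  have ra: "rotpair (om (int k)) (ak k y) (bk k y)" by (rule rot_ab[OF y])
  have rb: "rotpair (om (int k)) (bk k y) (- ak k y)" by (rule rot_swap[OF ra])
  have "ak k (ak k y) = ak k y" using ak_rot[OF ra, of k] by simp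
  moreover have "norm (ak k (ak k y)) \<le> norm (ak k y) / 2" by (rule bnd[OF rot_Y[OF ra]])
  ultimately have a0: "ak k y = 0" by simp
  have "ak k (bk k y) = bk k y" using ak_rot[OF rb, of k] by simp
  moreover have "norm (ak k (bk k y)) \<le> norm (bk k y) / 2" by (rule bnd[OF rot_Y[OF rb]])
  ultimately have b0: "bk k y = 0" by simp
  show ?thesis using a0 b0 by simp
qed

end


context per begin

lemma decomp:
  assumes fin: "\<forall>k>K. \<forall>y\<in>Y. ak k y = 0 \<and> bk k y = 0" and y: "y \<in> Y"
  shows "y = (\<Sum>k\<le>K. ak k y)"
proof -
  define r where "r = y - (\<Sum>k\<le>K. ak k y)"
  have rY: "r \<in> Y" unfolding r_def using y by (intro Y_diff Y_sum rot_Y[OF rot_ab]) auto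
  have "ak j r = 0 \<and> bk j r = 0" for j
  proof
    have la: "ak j r = ak j y - (\<Sum>k\<le>K. ak j (ak k y))"
      unfolding r_def using lin_ak[of j] by (simp add: linear_diff linear_sum)
    have "(\<Sum>k\<le>K. ak j (ak k y)) = (\<Sum>k\<le>K. if j = k then ak k y else 0)"
      by (rule sum.cong) (auto simp: ak_rot[OF rot_ab[OF y]])
    also have "\<dots> = (if j \<le> K then ak j y else 0)" by (simp add: sum.delta)
    finally show "ak j r = 0" using la fin y by (cases "j \<le> K") auto
    have lb: "bk j r = bk j y - (\<Sum>k\<le>K. bk j (ak k y))"
      unfolding r_def using lin_bk[of j] by (simp add: linear_diff linear_sum)
    have "(\<Sum>k\<le>K. bk j (ak k y)) = (\<Sum>k\<le>K. if j = k then (if k \<noteq> 0 then bk k y else 0) else 0)"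
      by (rule sum.cong) (auto simp: bk_rot[OF rot_ab[OF y]])
    also have "\<dots> = (if j \<le> K then (if j \<noteq> 0 then bk j y else 0) else 0)" by (simp add: sum.delta)
    finally show "bk j r = 0" using lb fin y bk0 by (cases "j \<le> K"; cases "j = 0") auto
  qed
  then have "\<forall>k::nat. Ac (int k) r = 0 \<and> As (int k) r = 0" using wt_nz unfolding ak_def bk_def by simp
  then have "r = 0" by (rule coeffs_zero[OF rY])
  then show ?thesis unfolding r_def by simp
qed

lemma Cp_Rv:
  assumes rp: "rotpair om' w w'" and tL: "\<forall>i\<in>set L. 0 \<le> t i"
  shows "Cp t L (Rv w w' z) = Rv w w' (prod_list (map (\<lambda>i. cis (om' * t i) - 1) L) * z)"
  using tL
proof (induction L)
  case Nil then show ?case by (simp add: Rv_def)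
next
  case (Cons i L)
  define c where "c = prod_list (map (\<lambda>i. cis (om' * t i) - 1) L)"
  have IH: "Cp t L (Rv w w' z) = Rv w w' (c * z)" using Cons unfolding c_def by simp
  have "Cp t (i#L) (Rv w w' z) = T (t i) (Rv w w' (c * z)) - Rv w w' (c * z)"
    by (simp add: Cp_Cons IH)
  also have "\<dots> = Rv w w' (cis (om' * t i) * (c * z)) - Rv w w' (c * z)"
    using rot_Rv[OF rp, of "t i" "c * z"] Cons.prems by simp
  also have "\<dots> = Rv w w' ((cis (om' * t i) - 1) * c * z)"
    by (simp add: Rv_diff algebra_simps)
  finally show ?case unfolding c_def by (simp add: mult.assoc)
qed

lemma fixed_range_zero:
  assumes tau: "0 \<le> \<tau>" and fx: "T \<tau> w = w" and wu: "w = T \<tau> u - u"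
  shows "w = 0"
proof -
  have it: "T (real m * \<tau>) u = u + real m *\<^sub>R w" for m
  proof (induction m)
    case 0 then show ?case by simp
  next
    case (Suc m)
    have "T (real (Suc m) * \<tau>) u = T (\<tau> + real m * \<tau>) u" by (simp add: algebra_simps)
    also have "\<dots> = T \<tau> (T (real m * \<tau>) u)" using Tadd tau by simp
    also have "\<dots> = T \<tau> u + real m *\<^sub>R T \<tau> w" unfolding Suc by (simp add: blinfun.add_right blinfun.scaleR_right)
    also have "\<dots> = u + real (Suc m) *\<^sub>R w"
    proof -
      have a: "T \<tau> u = u + w" using wu by simp
      show ?thesis unfolding a fx by (simp add: algebra_simps)
    qed
    finally show ?case .
  qed
  have bnd: "real m * norm w \<le> (Mb + 1) * norm u" for m
  proof -
    have "real m * norm w = norm (T (real m * \<tau>) u - u)" using it[of m] by simp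
    also have "\<dots> \<le> norm (T (real m * \<tau>) u) + norm u" by (rule norm_triangle_ineq4)
    also have "\<dots> \<le> Mb * norm u + norm u" using normTx[of "real m * \<tau>" u] tau by simp
    finally show ?thesis by (simp add: algebra_simps)
  qed
  show "w = 0"
  proof (rule ccontr)
    assume "w \<noteq> 0"
    then have nw: "0 < norm w" by simp
    obtain m :: nat where "(Mb + 1) * norm u / norm w < real m" using reals_Archimedean2 by blast
    then have "(Mb + 1) * norm u < real m * norm w" using nw by (simp add: field_simps)
    then show False using bnd[of m] by simp
  qed
qed

lemma ak_Cp:
  assumes tL: "\<forall>i\<in>set L. 0 \<le> t i"
  shows "ak k (Cp t L x) = Cp t L (ak k x)"
proof -
  have "Cp t L (Ac m x) = Ac m (Cp t L x)" for m
    unfolding Ac_def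
    by (subst integral_T_apply) (auto intro!: continuous_intros integral_cong simp: Cp_commT[OF tL])
  then show ?thesis unfolding ak_def by (simp add: blinfun.scaleR_right)
qed

lemma solve_comp:
  assumes rp: "rotpair (om m) w w'" and tL: "\<forall>i\<in>set L. 0 \<le> t i" and hw: "w = Cp t L v"
  shows "\<exists>z\<in>Y. Cp t L z = w"
proof -
  define c where "c = prod_list (map (\<lambda>i. cis (om m * t i) - 1) L)"
  show ?thesis
  proof (cases "c = 0")
    case False
    define z where "z = Rv w w' (1 / c)"
    have "z \<in> Y" unfolding z_def by (rule rot_Y[OF rotpair_Rv[OF rp]])
    moreover have "Cp t L z = w" unfolding z_def using Cp_Rv[OF rp tL, of "1/c"] False Rv_1 c_def by simp
    ultimately show ?thesis by blast
  next
    case True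
    then obtain i where i: "i \<in> set L" "cis (om m * t i) = 1" unfolding c_def prod_list_zero_iff by auto
    have fx: "T (t i) w = w" using rot_Rv[OF rp, of "t i" 1] i tL Rv_1 by simp
    have "w = T (t i) (Cp t (remove1 i L) v) - Cp t (remove1 i L) v" using hw Cp_remove[OF i(1) tL] by simp
    then have "w = 0" using fixed_range_zero[OF _ fx] tL i by blast
    then show ?thesis using Y0 by (auto intro!: bexI[of _ 0])
  qed
qed

lemma core_solve:
  assumes d: "0 < \<delta>" and uc: "\<forall>h. 0 < h \<longrightarrow> h < \<delta> \<longrightarrow> (\<forall>y\<in>Y. norm (T h y - y) \<le> norm y / (2 * Mb + 2))"
    and tL: "\<forall>i\<in>set L. 0 \<le> t i" and y: "Cp t L x \<in> Y"
  shows "\<exists>z\<in>Y. Cp t L z = Cp t L x"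
proof -
  define K where "K = nat (ceiling (p / (2 * \<delta>)))"
  have fin: "\<forall>k>K. \<forall>y\<in>Y. ak k y = 0 \<and> bk k y = 0"
  proof (intro allI impI ballI)
    fix k y assume k: "K < k" and yY: "y \<in> Y"
    have "p / (2 * \<delta>) \<le> real K" unfolding K_def by linarith
    then have "p / (2 * \<delta>) < real k" using k by linarith
    then show "ak k y = 0 \<and> bk k y = 0" by (rule RL[OF d uc _ yY])
  qed
  let ?y = "Cp t L x"
  have "\<forall>k. \<exists>z. z \<in> Y \<and> Cp t L z = ak k ?y"
  proof
    fix k
    have "\<exists>z\<in>Y. Cp t L z = ak k ?y"
      by (rule solve_comp[OF rot_ab[OF y] tL ak_Cp[OF tL]])
    then show "\<exists>z. z \<in> Y \<and> Cp t L z = ak k ?y" by blast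
  qed
  then obtain zf where zf: "\<And>k. zf k \<in> Y" "\<And>k. Cp t L (zf k) = ak k ?y" by metis
  define z where "z = (\<Sum>k\<le>K. zf k)"
  have "z \<in> Y" unfolding z_def using zf by (intro Y_sum) auto
  moreover have "Cp t L z = ?y"
    unfolding z_def blinfun.sum_right zf(2) using decomp[OF fin y] by simp
  ultimately show ?thesis by blast
qed

end


context per begin
lemma Tmult: "y \<in> Y \<Longrightarrow> T (real m * p) y = y"
proof (induction m)
  case 0 then show ?case by simp
next
  case (Suc m)
  have "T (real (Suc m) * p) y = T (real m * p + p) y" by (simp add: algebra_simps)
  also have "\<dots> = T (real m * p) (T p y)" using Tadd[of "real m * p" p y] ppos by simp
  also have "\<dots> = y" using Suc unfolding Y_def by simp
  finally show ?case .
qed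
end

context sg begin

lemma Cp_snoc: "Cp t (L @ [i]) x = Cp t L (T (t i) x - x)"
  by (induction L) (simp_all add: Cp_Cons)

lemma key:
  assumes nc: "norm_continuous_at_infinity T" and p: "0 < p" and tL: "\<forall>i\<in>set L. 0 \<le> t i"
    and y: "T p (Cp t L x) = Cp t L x"
  shows "\<exists>z. T p z = z \<and> Cp t L z = Cp t L x"
proof -
  interpret per T p by (intro per.intro sg_axioms per_axioms.intro p)
  obtain \<omega>0 where gb: "growth_bound T = ereal \<omega>0" and
    tend: "((\<lambda>t. Limsup (at_right 0) (\<lambda>h. ereal (norm
            (exp (- \<omega>0 * t) *\<^sub>R (T t o\<^sub>L (id_blinfun - exp (- \<omega>0 * h) *\<^sub>R T h))))))
          \<longlongrightarrow> 0) at_top"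
    using nc unfolding norm_continuous_at_infinity_def by blast
  define S where "S = {ereal \<omega> | \<omega>. \<exists>M. \<forall>t\<ge>0. norm (T t) \<le> M * exp (\<omega> * t)}"
  have gbS: "growth_bound T = Inf S" unfolding growth_bound_def S_def ..
  have "ereal 0 \<in> S" unfolding S_def using normT by auto
  then have "growth_bound T \<le> ereal 0" unfolding gbS by (rule Inf_lower)
  then have w0: "\<omega>0 \<le> 0" using gb by simp
  show ?thesis
  proof (cases "\<omega>0 < 0")
    case True
    then have "Inf S < ereal 0" using gb gbS by simp
    then obtain s where "s \<in> S" "s < ereal 0" by (auto simp: Inf_less_iff)
    then obtain \<omega> M where om: "\<omega> < 0" and M: "\<forall>t\<ge>0. norm (T t) \<le> M * exp (\<omega> * t)"
      unfolding S_def by auto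
    let ?y = "Cp t L x"
    have yY: "?y \<in> Y" using y unfolding Y_def by simp
    have "?y = 0"
    proof (rule ccontr)
      assume ny: "?y \<noteq> 0"
      have pos: "0 < 1 / (\<bar>M\<bar> + 1)" by simp
      have lt1: "exp (\<omega> * p) < 1" using om p by (simp add: mult_neg_pos)
      obtain m where m: "exp (\<omega> * p) ^ m < 1 / (\<bar>M\<bar> + 1)" using real_arch_pow_inv[OF pos lt1] by blast
      have e: "exp (\<omega> * (real m * p)) = exp (\<omega> * p) ^ m"
        using exp_of_nat_mult[of m "\<omega> * p"] by (simp add: algebra_simps)
      have "norm ?y = norm (T (real m * p) ?y)" using Tmult[OF yY] by simp
      also have "\<dots> \<le> norm (T (real m * p)) * norm ?y" by (rule norm_blinfun)
      also have "\<dots> \<le> (M * exp (\<omega> * p) ^ m) * norm ?y"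
        using M[rule_format, of "real m * p"] p e by (intro mult_right_mono) auto
      also have "\<dots> \<le> (\<bar>M\<bar> * (1 / (\<bar>M\<bar> + 1))) * norm ?y"
      proof (intro mult_right_mono)
        have "M * exp (\<omega> * p) ^ m \<le> \<bar>M\<bar> * exp (\<omega> * p) ^ m" by (intro mult_right_mono) auto
        also have "\<dots> \<le> \<bar>M\<bar> * (1 / (\<bar>M\<bar> + 1))" using m by (intro mult_left_mono) auto
        finally show "M * exp (\<omega> * p) ^ m \<le> \<bar>M\<bar> * (1 / (\<bar>M\<bar> + 1))" .
      qed auto
      also have "\<dots> < 1 * norm ?y" using ny by (intro mult_strict_right_mono) auto
      finally show False by simp
    qed
    then show ?thesis by (intro exI[of _ 0]) simp
  next
    case False
    then have w00: "\<omega>0 = 0" using w0 by simp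
    define \<eta> where "\<eta> = 1 / (2 * Mb + 2)"
    have \<eta>0: "0 < \<eta>" unfolding \<eta>_def using Mb_nonneg by simp
    have tend0: "((\<lambda>t. Limsup (at_right 0) (\<lambda>h. ereal (norm (T t o\<^sub>L (id_blinfun - T h))))) \<longlongrightarrow> 0) at_top"
      using tend unfolding w00 by simp
    have "eventually (\<lambda>t. Limsup (at_right 0) (\<lambda>h. ereal (norm (T t o\<^sub>L (id_blinfun - T h)))) < ereal \<eta>) at_top"
      by (rule order_tendstoD(2)[OF tend0]) (use \<eta>0 in simp)
    then obtain t0 where t0: "\<And>t. t \<ge> t0 \<Longrightarrow> Limsup (at_right 0) (\<lambda>h. ereal (norm (T t o\<^sub>L (id_blinfun - T h)))) < ereal \<eta>"
      unfolding eventually_at_top_linorder by blast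
    obtain m :: nat where m: "t0 / p < real m" using reals_Archimedean2 by blast
    define t1 where "t1 = real m * p"
    have t1: "t0 \<le> t1" unfolding t1_def using m p by (simp add: field_simps)
    have "eventually (\<lambda>h. ereal (norm (T t1 o\<^sub>L (id_blinfun - T h))) < ereal \<eta>) (at_right 0)"
      by (rule Limsup_lessD[OF t0[OF t1]])
    then obtain b where b: "0 < b" "\<And>h. 0 < h \<Longrightarrow> h < b \<Longrightarrow> norm (T t1 o\<^sub>L (id_blinfun - T h)) < \<eta>"
      unfolding eventually_at_right_field by auto
    have uc: "\<forall>h. 0 < h \<longrightarrow> h < b \<longrightarrow> (\<forall>y\<in>Y. norm (T h y - y) \<le> norm y / (2 * Mb + 2))"
    proof (intro allI impI ballI)
      fix h y assume h: "0 < h" "h < b" and yY: "y \<in> Y"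
      have "T h y \<in> Y" using TY[OF yY] h by simp
      then have "(T t1 o\<^sub>L (id_blinfun - T h)) y = y - T h y"
        using Tmult[OF yY, of m] Tmult[of "T h y" m] unfolding t1_def
        by (simp add: blinfun.diff_left blinfun.diff_right)
      then have "norm (T h y - y) = norm ((T t1 o\<^sub>L (id_blinfun - T h)) y)" by (simp add: norm_minus_commute)
      also have "\<dots> \<le> norm (T t1 o\<^sub>L (id_blinfun - T h)) * norm y" by (rule norm_blinfun)
      also have "\<dots> \<le> \<eta> * norm y" using b(2)[OF h] by (intro mult_right_mono) auto
      finally show "norm (T h y - y) \<le> norm y / (2 * Mb + 2)" unfolding \<eta>_def by simp
    qed
    have "Cp t L x \<in> Y" using y unfolding Y_def by simp
    then obtain z where "z \<in> Y" "Cp t L z = Cp t L x" using core_solve[OF b(1) uc tL] by blast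
    then show ?thesis unfolding Y_def by auto
  qed
qed

end

theorem theorem2p14:
  fixes T :: "real \<Rightarrow> ('a::banach \<Rightarrow>\<^sub>L 'a)"
    and n :: nat and t :: "nat \<Rightarrow> real"
  assumes "C0_semigroup T"
    and "bounded_semigroup T"
    and "norm_continuous_at_infinity T"
    and "\<forall>i<n. 0 \<le> t i"
  shows "ker (foldr (\<lambda>i A. (T (t i) - id_blinfun) o\<^sub>L A) [0..<n] id_blinfun)
         = (\<Sum>i<n. ker (T (t i) - id_blinfun))"
proof -
  interpret sg T using assms(1,2) by unfold_locales
  have Cp_eq: "foldr (\<lambda>i A. (T (t i) - id_blinfun) o\<^sub>L A) L id_blinfun = Cp t L" for L
    unfolding Cp_def ..
  have kerA: "ker (T (t i) - id_blinfun) = {x. T (t i) x - x = 0}" for i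
    unfolding ker_def by (simp add: blinfun.diff_left)
  show ?thesis unfolding Cp_eq using assms(4)
  proof (induction n)
    case 0
    show ?case unfolding ker_def by auto
  next
    case (Suc n)
    let ?S = "\<Sum>i<n. ker (T (t i) - id_blinfun)"
    have tL: "\<forall>i\<in>set [0..<n]. 0 \<le> t i" using Suc.prems by auto
    have IH: "ker (Cp t [0..<n]) = ?S" using Suc by auto
    have tn: "0 \<le> t n" using Suc.prems by auto
    have CS: "Cp t [0..<Suc n] x = T (t n) (Cp t [0..<n] x) - Cp t [0..<n] x" for x
      using Cp_snoc[of t "[0..<n]" n x] Cp_commT[OF tL tn, of x]
      by (simp add: blinfun.diff_right)
    have CS2: "Cp t [0..<Suc n] x = Cp t [0..<n] (T (t n) x - x)" for x
      using Cp_snoc[of t "[0..<n]" n x] by simp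
    have sumS: "(\<Sum>i<Suc n. ker (T (t i) - id_blinfun)) = ?S + ker (T (t n) - id_blinfun)"
      by (simp add: sum.lessThan_Suc)
    have zS: "0 \<in> ?S" using IH[symmetric] unfolding ker_def by simp
    show ?case unfolding sumS
    proof
      show "ker (Cp t [0..<Suc n]) \<subseteq> ?S + ker (T (t n) - id_blinfun)"
      proof
        fix x assume "x \<in> ker (Cp t [0..<Suc n])"
        then have fx: "T (t n) (Cp t [0..<n] x) = Cp t [0..<n] x" unfolding ker_def CS by simp
        show "x \<in> ?S + ker (T (t n) - id_blinfun)"
        proof (cases "t n = 0")
          case True
          have "x \<in> ker (T (t n) - id_blinfun)" unfolding kerA using True by simp
          then have "0 + x \<in> ?S + ker (T (t n) - id_blinfun)" using zS by blast
          then show ?thesis by simp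
        next
          case False
          then have pn: "0 < t n" using tn by simp
          obtain z where z: "T (t n) z = z" "Cp t [0..<n] z = Cp t [0..<n] x"
            using key[OF assms(3) pn tL fx] by blast
          have "x - z \<in> ker (Cp t [0..<n])" unfolding ker_def using z(2)
            by (simp add: blinfun.diff_right)
          then have "x - z \<in> ?S" using IH by simp
          moreover have "z \<in> ker (T (t n) - id_blinfun)" unfolding kerA using z(1) by simp
          ultimately have "(x - z) + z \<in> ?S + ker (T (t n) - id_blinfun)" by blast
          then show ?thesis by simp
        qed
      qed
    next
      show "?S + ker (T (t n) - id_blinfun) \<subseteq> ker (Cp t [0..<Suc n])"
      proof
        fix x assume "x \<in> ?S + ker (T (t n) - id_blinfun)"
        then obtain a b where ab: "x = a + b" "a \<in> ?S" "b \<in> ker (T (t n) - id_blinfun)"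
          by (rule set_plus_elim)
        have "a \<in> ker (Cp t [0..<n])" using ab(2) IH by simp
        then have a0: "Cp t [0..<n] a = 0" unfolding ker_def by simp
        have b0: "T (t n) b - b = 0" using ab(3) unfolding kerA by simp
        have "Cp t [0..<Suc n] a = 0" unfolding CS a0 by simp
        moreover have "Cp t [0..<Suc n] b = 0" unfolding CS2 b0 by simp
        ultimately show "x \<in> ker (Cp t [0..<Suc n])" unfolding ker_def ab(1)
          by (simp add: blinfun.add_right)
      qed
    qed
  qed
qed


end
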